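(* Let $\mathcal R$ be a strong CCTRS. If $s\in\mathcal T_{\mathrm p}(\mathcal H)$ is a proper ground term, then every $(\Xi(\mathcal R),\mu)$-normal form $t$ of $s$ (i.e., $s\to^*_{\Xi(\mathcal R),\mu}t$ and $t$ is irreducible with respect to $\to_{\Xi(\mathcal R),\mu}$) is a $\bot$-pattern.
   Context: A CCTRS over $\mathcal F$ is a set $\mathcal R$ of conditional rules each of the form $f(\ell_1,\dots,\ell_n)\to r\Leftarrow a_1\approx b_1,\dots,a_k\approx b_k$ (defined symbols are roots of left-hand sides, others constructors; constructor terms contain only constructors and variables) where $\ell_1,\dots,\ell_n,b_1,\dots,b_k$ are constructor terms, the terms $f(\ell_1,\dots,\ell_n),b_1,\dots,b_k$ pairwise share no variables, $\mathrm{Var}(r)\subseteq\mathrm{Var}(\ell_1,\dots,\ell_n,b_1,\dots,b_k)$, and $\mathrm{Var}(a_i)\subseteq\mathrm{Var}(\ell_1,\dots,\ell_n,b_1,\dots,b_{i-1})$. $\mathcal R{\restriction}f$ is the set of rules with left-hand root $f$. A strong CCTRS is a CCTRS with each $\mathcal R{\restriction}f$ finite and each $f(\ell_1,\dots,\ell_n)$ and $b_j$ linear. Let $m_f=|\mathcal R{\restriction}f|$ (0 for constructors), with fixed enumeration $\rho^f_1,\dots,\rho^f_{m_f}$. The transformed system: signature $\mathcal H$ with constants $\bot,\top$ ($\mu=\emptyset$); every $f\in\mathcal F$ of arity $n$ as a symbol of arity $n+m_f$ with $\mu(f)=\{1,\dots,n\}$; and for every defined $f$ of arity $n$, every $\rho^f_i$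 with $k>0$ conditions and $1\le j\le k$ a symbol $f_i^j$ of arity $n+m_f+j-1$ with $\mu(f_i^j)=\{n+i+j-1\}$. A position is active in $t$ if it is $\epsilon$ or $iq$ with $i\in\mu(\mathrm{root}(t))$ and $q$ active in $t|_i$; $\to_{\Xi(\mathcal R),\mu}$ rewrites only at active positions. $\xi_\star$ ($\star\in\{\bot,\top\}$): identity on variables, homomorphic on constructors, $f(t_1..t_n)\mapsto f(\xi_\star(t_1),\dots,\xi_\star(t_n),\star,\dots,\star)$ ($m_f$ copies) for defined $f$; a $\bot$-pattern is a linear term $\xi_\bot(t)$ with $t\in\mathcal T(\mathcal F,\mathcal V)$. For a linear constructor term $t$: $\mathrm{AP}(x)=\emptyset$, and $\mathrm{AP}(f(t_1,\dots,t_n))$ consists of $g(x_1,\dots,x_m)$ for every constructor $g\neq f$ of arity $m$, $g(x_1,\dots,x_m,\bot,\dots,\bot)$ for every defined $g$ of arity $m$, and $f(x_1,\dots,x_{i-1},u,x_{i+1},\dots,x_n)$ for $u\in\mathrm{AP}(t_i)$ (fresh distinct $x$'s). Notation: $\langle t_1,\dots,t_n\rangle[u_1,\dots,u_j]_i$ is $t_1,\dots,t_{i-1},u_1,\dots,u_j,t_{i+1},\dots,t_n$. For the $i$-th rule $\rho_i\colon f(\vec\ell)\to r\Leftarrow a_1\approx b_1,\dots,a_k\approx b_k$ of $\mathcal R{\restriction}f$ and fresh distinct $x_1,\dots,x_{m_f},y_1,\dots,y_n$, $\Xi(\mathcal R)$ contains: $(1)$ if $k=0$: $f(\vec\ell,\langle\vec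 x\rangle[\top]_i)\to\xi_\top(r)$; if $k>0$: $(2)$ $f(\vec\ell,\langle\vec x\rangle[\top]_i)\to f_i^1(\vec\ell,\langle\vec x\rangle[\xi_\top(a_1)]_i)$, $(3)$ $f_i^k(\vec\ell,\langle\vec x\rangle[b_1,\dots,b_k]_i)\to\xi_\top(r)$, $(4)$ for $1\le j<k$: $f_i^j(\vec\ell,\langle\vec x\rangle[b_1,\dots,b_j]_i)\to f_i^{j+1}(\vec\ell,\langle\vec x\rangle[b_1,\dots,b_j,\xi_\top(a_{j+1})]_i)$, $(5)$ for $1\le j\le k$ and $v\in\mathrm{AP}(b_j)$ (fresh variables): $f_i^j(\vec\ell,\langle\vec x\rangle[b_1,\dots,b_{j-1},v]_i)\to f(\vec\ell,\langle\vec x\rangle[\bot]_i)$; and for any $k$: $(6)$ for $1\le j\le n$ and $v\in\mathrm{AP}(\ell_j)$ (fresh variables): $f(\langle\vec y\rangle[v]_j,\langle\vec x\rangle[\top]_i)\to f(\langle\vec y\rangle[v]_j,\langle\vec x\rangle[\bot]_i)$. Proper terms $\mathcal T_{\mathrm p}(\mathcal H,\mathcal V)$: a term of $\mathcal T(\mathcal H,\mathcal V)$ is proper if it is a variable, or $f(s_1,\dots,s_n)$ with $f$ a constructor and proper $s_i$, or $f(s_1,\dots,s_n,c_1,\dots,c_{m_f})$ with $f$ defined, proper $s_i$ and $c_1,\dots,c_{m_f}\in\{\bot,\top\}$; $\mathcal T_{\mathrm p}(\mathcal H)$ denotes the ground proper terms. *)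

theory Defs
  imports Main
begin

datatype ('f, 'v) trm = Var 'v | Fun 'f "('f, 'v) trm list"

primrec vars :: "('f, 'v) trm \<Rightarrow> 'v set" where
  "vars (Var x) = {x}"
| "vars (Fun f ts) = \<Union> (set (map vars ts))"

primrec funs :: "('f, 'v) trm \<Rightarrow> 'f set" where
  "funs (Var x) = {}"
| "funs (Fun f ts) = insert f (\<Union> (set (map funs ts)))"

primrec vars_list :: "('f, 'v) trm \<Rightarrow> 'v list" where
  "vars_list (Var x) = [x]"
| "vars_list (Fun f ts) = concat (map vars_list ts)"

definition linear :: "('f, 'v) trm \<Rightarrow> bool" where
  "linear t \<longleftrightarrow> distinct (vars_list t)"

primrec subst :: "('v \<Rightarrow> ('f, 'w) trm) \<Rightarrow> ('f, 'v) trm \<Rightarrow> ('f, 'w) trm" where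
  "subst \<sigma> (Var x) = \<sigma> x"
| "subst \<sigma> (Fun f ts) = Fun f (map (subst \<sigma>) ts)"

fun wf_term :: "'f set \<Rightarrow> ('f \<Rightarrow> nat) \<Rightarrow> ('f, 'v) trm \<Rightarrow> bool" where
  "wf_term F ar (Var x) = True"
| "wf_term F ar (Fun f ts) = (f \<in> F \<and> length ts = ar f \<and> (\<forall>t \<in> set ts. wf_term F ar t))"

text \<open>A conditional rule \<open>l \<rightarrow> r \<Leftarrow> a1 \<approx> b1, ..., ak \<approx> bk\<close> is the triple
  \<open>(l, r, [(a1,b1),...,(ak,bk)])\<close>.\<close>
type_synonym ('f, 'v) crule = "('f, 'v) trm \<times> ('f, 'v) trm \<times> (('f, 'v) trm \<times> ('f, 'v) trm) list"

definition rlhs :: "('f, 'v) crule \<Rightarrow> ('f, 'v) trm" where "rlhs \<rho> = fst \<rho>"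
definition rrhs :: "('f, 'v) crule \<Rightarrow> ('f, 'v) trm" where "rrhs \<rho> = fst (snd \<rho>)"
definition rconds :: "('f, 'v) crule \<Rightarrow> (('f, 'v) trm \<times> ('f, 'v) trm) list" where
  "rconds \<rho> = snd (snd \<rho>)"

definition rules_of :: "('f, 'v) crule set \<Rightarrow> 'f \<Rightarrow> ('f, 'v) crule set" where
  "rules_of R f = {\<rho> \<in> R. \<exists>ls. rlhs \<rho> = Fun f ls}"

definition defined :: "('f, 'v) crule set \<Rightarrow> 'f \<Rightarrow> bool" where
  "defined R f \<longleftrightarrow> rules_of R f \<noteq> {}"

definition constructor_term :: "('f, 'v) crule set \<Rightarrow> ('f, 'v) trm \<Rightarrow> bool" where
  "constructor_term R t \<longleftrightarrow> (\<forall>g \<in> funs t. \<not> defined R g)"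

definition cctrs :: "'f set \<Rightarrow> ('f \<Rightarrow> nat) \<Rightarrow> ('f, 'v) crule set \<Rightarrow> bool" where
  "cctrs F ar R \<longleftrightarrow> (\<forall>\<rho> \<in> R. \<exists>f ls r cs. \<rho> = (Fun f ls, r, cs) \<and>
      wf_term F ar (Fun f ls) \<and> wf_term F ar r \<and>
      (\<forall>(a, b) \<in> set cs. wf_term F ar a \<and> wf_term F ar b) \<and>
      (\<forall>l \<in> set ls. constructor_term R l) \<and>
      (\<forall>(a, b) \<in> set cs. constructor_term R b) \<and>
      (let T = Fun f ls # map snd cs in
         \<forall>i < length T. \<forall>j < length T. i \<noteq> j \<longrightarrow> vars (T ! i) \<inter> vars (T ! j) = {}) \<and>
      vars r \<subseteq> vars (Fun f ls) \<union> \<Union> (set (map (vars \<circ> snd) cs)) \<and>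
      (\<forall>i < length cs. vars (fst (cs ! i)) \<subseteq>
          vars (Fun f ls) \<union> \<Union> (set (map (vars \<circ> snd) (take i cs)))))"

definition strong_cctrs :: "'f set \<Rightarrow> ('f \<Rightarrow> nat) \<Rightarrow> ('f, 'v) crule set \<Rightarrow> bool" where
  "strong_cctrs F ar R \<longleftrightarrow> cctrs F ar R \<and> (\<forall>f. finite (rules_of R f)) \<and>
     (\<forall>\<rho> \<in> R. linear (rlhs \<rho>) \<and> (\<forall>(a, b) \<in> set (rconds \<rho>). linear b))"

text \<open>\<open>Orig f\<close> is \<open>f \<in> F\<close> (with arity \<open>n + m_f\<close>), \<open>Cond f i j\<close> is \<open>f_i^j\<close>
  (indices \<open>i, j\<close> are 1-based as in the paper).\<close>
datatype 'f hsym = Bot | Top | Orig 'f | Cond 'f nat nat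

abbreviation hconst :: "'f hsym \<Rightarrow> ('f hsym, 'v) trm" where
  "hconst c \<equiv> Fun c []"

text \<open>Replacement-map \<open>\<mu>\<close> (argument positions 1-based).\<close>
fun mu :: "('f \<Rightarrow> nat) \<Rightarrow> 'f hsym \<Rightarrow> nat set" where
  "mu ar Bot = {}"
| "mu ar Top = {}"
| "mu ar (Orig f) = {1..ar f}"
| "mu ar (Cond f i j) = {ar f + i + j - 1}"

text \<open>\<open>\<xi>_\<star>\<close>; \<open>m f\<close> is the number of rules defining \<open>f\<close> (0 for constructors, for
  which \<open>\<xi>_\<star>\<close> is therefore homomorphic).\<close>
primrec xi :: "('f \<Rightarrow> nat) \<Rightarrow> 'f hsym \<Rightarrow> ('f, 'v) trm \<Rightarrow> ('f hsym, 'v) trm" where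
  "xi m c (Var x) = Var x"
| "xi m c (Fun f ts) = Fun (Orig f) (map (xi m c) ts @ replicate (m f) (hconst c))"

primrec emb :: "('f, 'v) trm \<Rightarrow> ('f hsym, 'v) trm" where
  "emb (Var x) = Var x"
| "emb (Fun f ts) = Fun (Orig f) (map emb ts)"

text \<open>\<open>\<langle>t_1..t_n\<rangle>[u_1..u_j]_i\<close> (1-based \<open>i\<close>).\<close>
definition repl_at :: "'a list \<Rightarrow> nat \<Rightarrow> 'a list \<Rightarrow> 'a list" where
  "repl_at ts i us = take (i - 1) ts @ us @ drop i ts"

text \<open>Anti-patterns \<open>AP(t)\<close> (with fresh distinct variables: each pattern is linear).\<close>
inductive AP :: "'f set \<Rightarrow> ('f \<Rightarrow> nat) \<Rightarrow> ('f, 'v) crule set \<Rightarrow> ('f \<Rightarrow> nat)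
    \<Rightarrow> ('f, 'v) trm \<Rightarrow> ('f hsym, 'v) trm \<Rightarrow> bool"
  for F ar R m where
  AP_con: "g \<in> F \<Longrightarrow> \<not> defined R g \<Longrightarrow> g \<noteq> f \<Longrightarrow> length xs = ar g \<Longrightarrow> distinct xs \<Longrightarrow>
     AP F ar R m (Fun f ts) (Fun (Orig g) (map Var xs))"
| AP_def: "g \<in> F \<Longrightarrow> defined R g \<Longrightarrow> length xs = ar g \<Longrightarrow> distinct xs \<Longrightarrow>
     AP F ar R m (Fun f ts) (Fun (Orig g) (map Var xs @ replicate (m g) (hconst Bot)))"
| AP_arg: "1 \<le> i \<Longrightarrow> i \<le> length ts \<Longrightarrow> AP F ar R m (ts ! (i - 1)) u \<Longrightarrow>
     length xs = length ts \<Longrightarrow> distinct xs \<Longrightarrow> set xs \<inter> vars u = {} \<Longrightarrow>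
     AP F ar R m (Fun f ts) (Fun (Orig f) (repl_at (map Var xs) i [u]))"

text \<open>\<open>enum f\<close> is the fixed enumeration \<open>\<rho>^f_1, ..., \<rho>^f_{m_f}\<close> of \<open>R\<restriction>f\<close>;
  \<open>m_f = length (enum f)\<close>.\<close>
definition mf :: "('f \<Rightarrow> ('f, 'v) crule list) \<Rightarrow> 'f \<Rightarrow> nat" where
  "mf enum f = length (enum f)"

definition rule_vars :: "('f, 'v) crule \<Rightarrow> 'v set" where
  "rule_vars \<rho> = vars (rlhs \<rho>) \<union> vars (rrhs \<rho>) \<union>
     \<Union> (set (map (\<lambda>(a, b). vars a \<union> vars b) (rconds \<rho>)))"

inductive_set Xi :: "'f set \<Rightarrow> ('f \<Rightarrow> nat) \<Rightarrow> ('f, 'v) crule set \<Rightarrow> ('f \<Rightarrow> ('f, 'v) crule list)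
    \<Rightarrow> (('f hsym, 'v) trm \<times> ('f hsym, 'v) trm) set"
  for F ar R enum where
  Xi1: "\<lbrakk>1 \<le> i; i \<le> mf enum f; enum f ! (i - 1) = (Fun f ls, r, []);
         length xs = mf enum f; distinct xs; set xs \<inter> rule_vars (enum f ! (i - 1)) = {}\<rbrakk> \<Longrightarrow>
     (Fun (Orig f) (map emb ls @ repl_at (map Var xs) i [hconst Top]), xi (mf enum) Top r)
       \<in> Xi F ar R enum"
| Xi2: "\<lbrakk>1 \<le> i; i \<le> mf enum f; enum f ! (i - 1) = (Fun f ls, r, cs); cs \<noteq> [];
         length xs = mf enum f; distinct xs; set xs \<inter> rule_vars (enum f ! (i - 1)) = {}\<rbrakk> \<Longrightarrow>
     (Fun (Orig f) (map emb ls @ repl_at (map Var xs) i [hconst Top]),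
      Fun (Cond f i 1) (map emb ls @ repl_at (map Var xs) i [xi (mf enum) Top (fst (cs ! 0))]))
       \<in> Xi F ar R enum"
| Xi3: "\<lbrakk>1 \<le> i; i \<le> mf enum f; enum f ! (i - 1) = (Fun f ls, r, cs); cs \<noteq> [];
         length xs = mf enum f; distinct xs; set xs \<inter> rule_vars (enum f ! (i - 1)) = {}\<rbrakk> \<Longrightarrow>
     (Fun (Cond f i (length cs)) (map emb ls @ repl_at (map Var xs) i (map (emb \<circ> snd) cs)),
      xi (mf enum) Top r)
       \<in> Xi F ar R enum"
| Xi4: "\<lbrakk>1 \<le> i; i \<le> mf enum f; enum f ! (i - 1) = (Fun f ls, r, cs); 1 \<le> j; j < length cs;
         length xs = mf enum f; distinct xs; set xs \<inter> rule_vars (enum f ! (i - 1)) = {}\<rbrakk> \<Longrightarrow>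
     (Fun (Cond f i j) (map emb ls @ repl_at (map Var xs) i (map (emb \<circ> snd) (take j cs))),
      Fun (Cond f i (Suc j)) (map emb ls @ repl_at (map Var xs) i
          (map (emb \<circ> snd) (take j cs) @ [xi (mf enum) Top (fst (cs ! j))])))
       \<in> Xi F ar R enum"
| Xi5: "\<lbrakk>1 \<le> i; i \<le> mf enum f; enum f ! (i - 1) = (Fun f ls, r, cs); 1 \<le> j; j \<le> length cs;
         AP F ar R (mf enum) (snd (cs ! (j - 1))) v;
         length xs = mf enum f; distinct xs; set xs \<inter> rule_vars (enum f ! (i - 1)) = {};
         vars v \<inter> (set xs \<union> rule_vars (enum f ! (i - 1))) = {}\<rbrakk> \<Longrightarrow>
     (Fun (Cond f i j) (map emb ls @ repl_at (map Var xs) i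
          (map (emb \<circ> snd) (take (j - 1) cs) @ [v])),
      Fun (Orig f) (map emb ls @ repl_at (map Var xs) i [hconst Bot]))
       \<in> Xi F ar R enum"
| Xi6: "\<lbrakk>1 \<le> i; i \<le> mf enum f; enum f ! (i - 1) = (Fun f ls, r, cs); 1 \<le> j; j \<le> length ls;
         AP F ar R (mf enum) (ls ! (j - 1)) v;
         length xs = mf enum f; length ys = length ls; distinct (xs @ ys);
         vars v \<inter> (set xs \<union> set ys) = {}\<rbrakk> \<Longrightarrow>
     (Fun (Orig f) (repl_at (map Var ys) j [v] @ repl_at (map Var xs) i [hconst Top]),
      Fun (Orig f) (repl_at (map Var ys) j [v] @ repl_at (map Var xs) i [hconst Bot]))
       \<in> Xi F ar R enum"

inductive cs_step :: "'f set \<Rightarrow> ('f \<Rightarrow> nat) \<Rightarrow> ('f, 'v) crule set \<Rightarrow> ('f \<Rightarrow> ('f, 'v) crule list)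
    \<Rightarrow> ('f hsym, 'v) trm \<Rightarrow> ('f hsym, 'v) trm \<Rightarrow> bool"
  for F ar R enum where
  cs_root: "(l, r) \<in> Xi F ar R enum \<Longrightarrow> cs_step F ar R enum (subst \<sigma> l) (subst \<sigma> r)"
| cs_arg: "i \<in> mu ar g \<Longrightarrow> 1 \<le> i \<Longrightarrow> i \<le> length ts \<Longrightarrow> cs_step F ar R enum (ts ! (i - 1)) u \<Longrightarrow>
     cs_step F ar R enum (Fun g ts) (Fun g (ts[i - 1 := u]))"

inductive proper :: "'f set \<Rightarrow> ('f \<Rightarrow> nat) \<Rightarrow> ('f, 'v) crule set \<Rightarrow> ('f \<Rightarrow> ('f, 'v) crule list)
    \<Rightarrow> ('f hsym, 'v) trm \<Rightarrow> bool"
  for F ar R enum where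
  proper_var: "proper F ar R enum (Var x)"
| proper_con: "f \<in> F \<Longrightarrow> \<not> defined R f \<Longrightarrow> length ss = ar f \<Longrightarrow>
     (\<forall>s' \<in> set ss. proper F ar R enum s') \<Longrightarrow> proper F ar R enum (Fun (Orig f) ss)"
| proper_def: "f \<in> F \<Longrightarrow> defined R f \<Longrightarrow> length ss = ar f \<Longrightarrow>
     (\<forall>s' \<in> set ss. proper F ar R enum s') \<Longrightarrow> length cs = mf enum f \<Longrightarrow>
     set cs \<subseteq> {hconst Bot, hconst Top} \<Longrightarrow> proper F ar R enum (Fun (Orig f) (ss @ cs))"

definition proper_ground :: "'f set \<Rightarrow> ('f \<Rightarrow> nat) \<Rightarrow> ('f, 'v) crule set
    \<Rightarrow> ('f \<Rightarrow> ('f, 'v) crule list) \<Rightarrow> ('f hsym, 'v) trm \<Rightarrow> bool" where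
  "proper_ground F ar R enum s \<longleftrightarrow> proper F ar R enum s \<and> vars s = {}"

definition bot_pattern :: "'f set \<Rightarrow> ('f \<Rightarrow> nat) \<Rightarrow> ('f \<Rightarrow> ('f, 'v) crule list)
    \<Rightarrow> ('f hsym, 'v) trm \<Rightarrow> bool" where
  "bot_pattern F ar enum u \<longleftrightarrow> linear u \<and> (\<exists>t. wf_term F ar t \<and> u = xi (mf enum) Bot t)"

end

theory Submission
  imports Defs
begin


lemma finite_vars[simp]: "finite (vars t)"
  by (induction t) auto

lemma set_vars_list[simp]: "set (vars_list t) = vars t"
  by (induction t) auto

lemma subst_agree: "(\<forall>x\<in>vars t. \<sigma> x = \<tau> x) \<Longrightarrow> subst \<sigma> t = subst \<tau> t"
  by (induction t) auto

lemma subst_eq_agree: "subst \<sigma> t = subst \<tau> t \<Longrightarrow> \<forall>x\<in>vars t. \<sigma> x = \<tau> x"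
  by (induction t) (auto simp: map_eq_conv)

lemma vars_emb[simp]: "vars (emb t) = vars t" by (induction t) auto
lemma vars_list_emb[simp]: "vars_list (emb t) = vars_list t" by (induction t) (auto cong: map_cong)
lemma vars_xi[simp]: "vars (xi m c t) = vars t" by (induction t) auto
lemma vars_subst: "vars (subst \<sigma> t) = \<Union> ((\<lambda>x. vars (\<sigma> x)) ` vars t)" by (induction t) auto

lemma map_repl_at[simp]: "map f (repl_at L i X) = repl_at (map f L) i (map f X)"
  by (simp add: repl_at_def take_map drop_map)
lemma length_repl_at[simp]: "1 \<le> i \<Longrightarrow> i \<le> length L \<Longrightarrow> length (repl_at L i X) = length L - 1 + length X"
  by (simp add: repl_at_def)
lemma repl_repl: "1 \<le> i \<Longrightarrow> i \<le> length L \<Longrightarrow> length Y = 1 \<Longrightarrow> repl_at (repl_at L i Y) i X = repl_at L i X"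
  by (simp add: repl_at_def)
lemma repl_nth: "1 \<le> i \<Longrightarrow> i \<le> length L \<Longrightarrow> repl_at L i [L!(i-1)] = L"
  unfolding repl_at_def using id_take_nth_drop[of "i-1" L] by simp
lemma repl_eq: "length L = length L' \<Longrightarrow> 1 \<le> i \<Longrightarrow> i \<le> length L \<Longrightarrow> length B = length B' \<Longrightarrow>
   repl_at L i B = repl_at L' i B' \<Longrightarrow> B = B' \<and> take (i-1) L = take (i-1) L' \<and> drop i L = drop i L'"
  unfolding repl_at_def by (simp add: append_eq_append_conv)
lemma repl_cong: "take (i-1) L = take (i-1) L' \<Longrightarrow> drop i L = drop i L' \<Longrightarrow> repl_at L i X = repl_at L' i X"
  by (simp add: repl_at_def)
lemma set_repl: "set (repl_at L i X) \<subseteq> set L \<union> set X"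
  unfolding repl_at_def using set_take_subset set_drop_subset by fastforce

definition upd :: "('v \<Rightarrow> 'a) \<Rightarrow> 'v list \<Rightarrow> 'a list \<Rightarrow> 'v \<Rightarrow> 'a" where
  "upd \<sigma> xs vs x = (case map_of (zip xs vs) x of None \<Rightarrow> \<sigma> x | Some v \<Rightarrow> v)"

lemma upd_out: "x \<notin> set xs \<Longrightarrow> upd \<sigma> xs vs x = \<sigma> x"
  unfolding upd_def by (auto dest: set_zip_leftD split: option.split dest!: map_of_SomeD)

lemma upd_map: "distinct xs \<Longrightarrow> length xs = length vs \<Longrightarrow> map (upd \<sigma> xs vs) xs = vs"
  by (auto simp: upd_def map_of_zip_nth intro!: nth_equalityI)

lemma subst_upd: "vars t \<inter> set xs = {} \<Longrightarrow> subst (upd \<sigma> xs vs) t = subst \<sigma> t"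
  by (rule subst_agree) (metis disjoint_iff upd_out)

lemma fresh_list: assumes "infinite (UNIV::'v set)" "finite V"
  shows "\<exists>xs::'v list. length xs = n \<and> distinct xs \<and> set xs \<inter> V = {}"
proof (induction n)
  case 0 show ?case by simp
next
  case (Suc n) then obtain xs where xs: "length xs = n" "distinct xs" "set xs \<inter> V = {}" by blast
  obtain x where "x \<notin> V \<union> set xs" using assms ex_new_if_finite[of "V \<union> set xs"] by auto
  then show ?case using xs by (intro exI[of _ "x # xs"]) auto
qed

lemma combine: "distinct (concat (map vars_list ps)) \<Longrightarrow> length ws = length ps \<Longrightarrow>
  (\<forall>k<length ps. \<exists>\<sigma>. subst \<sigma> (ps!k) = ws!k) \<Longrightarrow> \<exists>\<sigma>. map (subst \<sigma>) ps = ws"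
proof (induction ps arbitrary: ws)
  case Nil thus ?case by simp
next
  case (Cons p ps)
  obtain w ws' where ws: "ws = w # ws'" using Cons.prems(2) by (cases ws) auto
  from Cons.prems(3) obtain \<sigma>1 where 1: "subst \<sigma>1 p = w" using ws by force
  have "\<exists>\<sigma>. map (subst \<sigma>) ps = ws'"
  proof (rule Cons.IH)
    show "distinct (concat (map vars_list ps))" using Cons.prems(1) by simp
    show "length ws' = length ps" using Cons.prems(2) ws by simp
    show "\<forall>k<length ps. \<exists>\<sigma>. subst \<sigma> (ps ! k) = ws' ! k"
      using Cons.prems(3) ws by (metis Suc_less_eq length_Cons nth_Cons_Suc)
  qed
  then obtain \<sigma>2 where 2: "map (subst \<sigma>2) ps = ws'" by blast
  have disj: "vars p \<inter> vars q = {}" if "q \<in> set ps" for q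
    using Cons.prems(1) that by (auto simp: set_vars_list[symmetric] simp del: set_vars_list)
  define \<sigma> where "\<sigma> x = (if x \<in> vars p then \<sigma>1 x else \<sigma>2 x)" for x
  have "subst \<sigma> p = w" using 1 by (metis \<sigma>_def subst_agree)
  moreover have "map (subst \<sigma>) ps = ws'"
    unfolding 2[symmetric] using disj by (force intro!: subst_agree simp: \<sigma>_def)
  ultimately show ?case using ws by (intro exI[of _ \<sigma>]) simp
qed



inductive good :: "'f set \<Rightarrow> ('f \<Rightarrow> nat) \<Rightarrow> ('f,'v) crule set \<Rightarrow> ('f \<Rightarrow> ('f,'v) crule list) \<Rightarrow> ('f hsym,'v) trm \<Rightarrow> bool"
  for F ar R enum where
  g_con: "f \<in> F \<Longrightarrow> \<not> defined R f \<Longrightarrow> length ss = ar f \<Longrightarrow> (\<forall>s\<in>set ss. good F ar R enum s) \<Longrightarrow> good F ar R enum (Fun (Orig f) ss)"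
| g_def: "f \<in> F \<Longrightarrow> defined R f \<Longrightarrow> length ss = ar f \<Longrightarrow> (\<forall>s\<in>set ss. good F ar R enum s) \<Longrightarrow> length cs = mf enum f \<Longrightarrow> set cs \<subseteq> {hconst Bot, hconst Top} \<Longrightarrow> good F ar R enum (Fun (Orig f) (ss @ cs))"
| g_cond: "1 \<le> i \<Longrightarrow> i \<le> mf enum f \<Longrightarrow> enum f ! (i-1) = (Fun f ls, r, conds) \<Longrightarrow> length ls = ar f \<Longrightarrow> 1 \<le> j \<Longrightarrow> j \<le> length conds \<Longrightarrow> length cs = mf enum f \<Longrightarrow> set cs \<subseteq> {hconst Bot, hconst Top} \<Longrightarrow>
   (\<forall>x \<in> vars (Fun f ls) \<union> \<Union> (set (map (vars \<circ> snd) (take (j-1) conds))). good F ar R enum (\<sigma> x)) \<Longrightarrow> good F ar R enum u \<Longrightarrow>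
   good F ar R enum (Fun (Cond f i j) (map (subst \<sigma> \<circ> emb) ls @ repl_at cs i (map (subst \<sigma> \<circ> emb \<circ> snd) (take (j-1) conds) @ [u])))"

lemma good_ground: "good F ar R enum t \<Longrightarrow> vars t = {}"
proof (induction rule: good.induct)
  case (g_def f ss cs) thus ?case by auto
next
  case (g_cond i f ls r conds j cs \<sigma> u)
  have "\<forall>y\<in>set (repl_at cs i (map (subst \<sigma> \<circ> emb \<circ> snd) (take (j-1) conds) @ [u])). vars y = {}"
  proof -
    have "\<forall>c\<in>set cs. vars c = {}" using g_cond by auto
    moreover have "\<forall>y\<in>set (take (j-1) conds). vars (subst \<sigma> (emb (snd y))) = {}"
      using g_cond by (force simp: vars_subst)
    ultimately show ?thesis using g_cond.IH set_repl[of cs i "map (subst \<sigma> \<circ> emb \<circ> snd) (take (j-1) conds) @ [u]"]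
      by fastforce
  qed
  moreover have "\<forall>l\<in>set ls. vars (subst \<sigma> (emb l)) = {}" using g_cond by (force simp: vars_subst)
  ultimately show ?case by (auto simp del: map_repl_at)
qed auto

locale L =
  fixes F :: "'f set" and ar :: "'f \<Rightarrow> nat" and R :: "('f,'v) crule set" and enum :: "'f \<Rightarrow> ('f, 'v) crule list"
  assumes inf: "infinite (UNIV :: 'v set)"
    and strong: "strong_cctrs F ar R"
    and en: "\<forall>f. distinct (enum f) \<and> set (enum f) = rules_of R f"
begin

abbreviation "G \<equiv> good F ar R enum"
abbreviation "m \<equiv> mf enum"

lemma mf0: "\<not> defined R g \<Longrightarrow> m g = 0"
  using en unfolding defined_def mf_def by (metis list.size(3) set_empty)

lemma rule_in: "1 \<le> i \<Longrightarrow> i \<le> m f \<Longrightarrow> enum f ! (i-1) \<in> rules_of R f"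
  using en nth_mem[of "i-1" "enum f"] unfolding mf_def by auto

lemma defined_of: "1 \<le> i \<Longrightarrow> i \<le> m f \<Longrightarrow> defined R f"
  using rule_in unfolding defined_def by blast

lemma rule_shape: assumes "1 \<le> i" "i \<le> m f" shows "\<exists>ls r conds. enum f!(i-1) = (Fun f ls, r, conds)"
proof -
  have "enum f ! (i-1) \<in> rules_of R f" using rule_in assms by blast
  then obtain ls where "rlhs (enum f ! (i-1)) = Fun f ls" unfolding rules_of_def by blast
  then show ?thesis unfolding rlhs_def by (metis prod.collapse)
qed

lemma rule_props: assumes "1 \<le> i" "i \<le> m f" "enum f ! (i-1) = (Fun f ls, r, conds)"
  shows "f \<in> F" "length ls = ar f" "\<forall>l\<in>set ls. wf_term F ar l \<and> constructor_term R l"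
    "wf_term F ar r" "\<forall>(a,b)\<in>set conds. wf_term F ar a \<and> wf_term F ar b \<and> constructor_term R b \<and> linear b"
    "linear (Fun f ls)"
    "\<forall>k<length conds. vars (Fun f ls) \<inter> vars (snd (conds!k)) = {}"
    "\<forall>k<length conds. \<forall>k'<length conds. k \<noteq> k' \<longrightarrow> vars (snd (conds!k)) \<inter> vars (snd (conds!k')) = {}"
    "vars r \<subseteq> vars (Fun f ls) \<union> \<Union> (set (map (vars \<circ> snd) conds))"
    "\<forall>k<length conds. vars (fst (conds!k)) \<subseteq> vars (Fun f ls) \<union> \<Union> (set (map (vars \<circ> snd) (take k conds)))"
proof -
  have \<rho>R: "(Fun f ls, r, conds) \<in> R" using rule_in[OF assms(1,2)] assms(3) by (simp add: rules_of_def)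
  from strong have C: "cctrs F ar R" and lin: "\<forall>\<rho>\<in>R. linear (rlhs \<rho>) \<and> (\<forall>(a,b)\<in>set (rconds \<rho>). linear b)"
    by (auto simp: strong_cctrs_def)
  note B = bspec[OF C[unfolded cctrs_def] \<rho>R]
  note Lin = bspec[OF lin \<rho>R]
  show "f \<in> F" "length ls = ar f" "\<forall>l\<in>set ls. wf_term F ar l \<and> constructor_term R l" "wf_term F ar r"
    using B by auto
  show "\<forall>(a,b)\<in>set conds. wf_term F ar a \<and> wf_term F ar b \<and> constructor_term R b \<and> linear b"
    using B Lin by (auto simp: rconds_def)
  show "linear (Fun f ls)" using Lin by (simp add: rlhs_def)
  show "vars r \<subseteq> vars (Fun f ls) \<union> \<Union> (set (map (vars \<circ> snd) conds))" using B by auto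
  show "\<forall>k<length conds. vars (fst (conds!k)) \<subseteq> vars (Fun f ls) \<union> \<Union> (set (map (vars \<circ> snd) (take k conds)))"
    using B by auto
  define T where "T = Fun f ls # map snd conds"
  have PW: "\<forall>a<length T. \<forall>b<length T. a \<noteq> b \<longrightarrow> vars (T!a) \<inter> vars (T!b) = {}"
    using B by (simp add: T_def Let_def)
  show "\<forall>k<length conds. vars (Fun f ls) \<inter> vars (snd (conds!k)) = {}"
  proof (intro allI impI)
    fix k assume "k < length conds"
    then show "vars (Fun f ls) \<inter> vars (snd (conds!k)) = {}" using PW[rule_format, of 0 "Suc k"] by (simp add: T_def)
  qed
  show "\<forall>k<length conds. \<forall>k'<length conds. k \<noteq> k' \<longrightarrow> vars (snd (conds!k)) \<inter> vars (snd (conds!k')) = {}"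
  proof (intro allI impI)
    fix k k' assume "k < length conds" "k' < length conds" "k \<noteq> k'"
    then show "vars (snd (conds!k)) \<inter> vars (snd (conds!k')) = {}" using PW[rule_format, of "Suc k" "Suc k'"] by (simp add: T_def)
  qed
qed


lemma ct_Fun: "constructor_term R (Fun g ts) \<longleftrightarrow> \<not> defined R g \<and> (\<forall>t\<in>set ts. constructor_term R t)"
  unfolding constructor_term_def by auto

lemma emb_xi: "constructor_term R l \<Longrightarrow> emb l = xi m c l"
  by (induction l) (auto simp: ct_Fun mf0)

lemma good_xi: "wf_term F ar r \<Longrightarrow> \<forall>x\<in>vars r. G (\<sigma> x) \<Longrightarrow> c \<in> {Bot, Top} \<Longrightarrow> G (subst \<sigma> (xi m c r))"
proof (induction r)
  case (Var x) thus ?case by simp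
next
  case (Fun g ts)
  have args: "\<forall>s\<in>set (map (subst \<sigma> \<circ> xi m c) ts). G s" using Fun by auto
  show ?case
  proof (cases "defined R g")
    case True
    have "G (Fun (Orig g) (map (subst \<sigma> \<circ> xi m c) ts @ replicate (m g) (hconst c)))"
      by (rule g_def) (use Fun True args in auto)
    then show ?thesis by simp
  next
    case False
    have "G (Fun (Orig g) (map (subst \<sigma> \<circ> xi m c) ts))"
      by (rule g_con) (use Fun False args in auto)
    then show ?thesis using False by (simp add: mf0)
  qed
qed

lemma wf_Fun: "wf_term F ar (Fun g ts) \<Longrightarrow> t \<in> set ts \<Longrightarrow> wf_term F ar t" by auto

lemma good_emb: "constructor_term R l \<Longrightarrow> wf_term F ar l \<Longrightarrow> \<forall>x\<in>vars l. G (\<sigma> x) \<Longrightarrow> G (subst \<sigma> (emb l))"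
  using good_xi[of l \<sigma> Bot] emb_xi[of l Bot] by simp

lemma good_emb_inv: "constructor_term R l \<Longrightarrow> G (subst \<sigma> (emb l)) \<Longrightarrow> \<forall>x\<in>vars l. G (\<sigma> x)"
proof (induction l)
  case (Var x) thus ?case by simp
next
  case (Fun g ts)
  have nd: "\<not> defined R g" and ct: "\<forall>t\<in>set ts. constructor_term R t" using Fun.prems(1) by (auto simp: ct_Fun)
  from Fun.prems(2) have "\<forall>s\<in>set (map (subst \<sigma> \<circ> emb) ts). G s"
    by (cases rule: good.cases) (use nd in auto)
  then show ?case using Fun.IH ct by auto
qed

lemma proper_good: "proper F ar R enum s \<Longrightarrow> vars s = {} \<Longrightarrow> G s"
proof (induction rule: proper.induct)
  case (proper_con f ss) thus ?case by (intro g_con) auto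
next
  case (proper_def f ss cs) thus ?case by (intro g_def) auto
qed auto

end

context L begin

lemma inv_orig: assumes "G (Fun (Orig f) (A @ B))" "defined R f" "length A = ar f"
  shows "(\<forall>s\<in>set A. G s) \<and> set B \<subseteq> {hconst Bot, hconst Top} \<and> length B = m f"
proof -
  obtain ss cs where E: "A @ B = ss @ cs" "length ss = ar f" "\<forall>s\<in>set ss. G s" "length cs = m f"
    "set cs \<subseteq> {hconst Bot, hconst Top}"
    using assms(1) by (cases rule: good.cases) (use assms(2) in auto)
  then have "ss = A \<and> cs = B" using assms(3) by (simp add: append_eq_append_conv)
  then show ?thesis using E by auto
qed

lemma inv_cond: assumes "G (Fun (Cond f i j) (A @ repl_at B i C))" "enum f ! (i-1) = (Fun f ls, r, conds)"
  "1 \<le> i" "i \<le> m f" "length A = length ls" "length B = m f" "length C = j"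
shows "\<exists>\<sigma>' u cs'. A = map (subst \<sigma>' \<circ> emb) ls \<and> C = map (subst \<sigma>' \<circ> emb \<circ> snd) (take (j-1) conds) @ [u] \<and> G u \<and>
   (\<forall>x\<in>vars (Fun f ls) \<union> \<Union> (set (map (vars \<circ> snd) (take (j-1) conds))). G (\<sigma>' x)) \<and>
   take (i-1) B = take (i-1) cs' \<and> drop i B = drop i cs' \<and> set cs' \<subseteq> {hconst Bot, hconst Top} \<and> length cs' = m f \<and> 1 \<le> j \<and> j \<le> length conds"
proof -
  obtain ls' r' conds' cs' \<sigma>' u where g_cond:
    "A @ repl_at B i C = map (subst \<sigma>' \<circ> emb) ls' @ repl_at cs' i (map (subst \<sigma>' \<circ> emb \<circ> snd) (take (j - 1) conds') @ [u])"
    "enum f ! (i - 1) = (Fun f ls', r', conds')" "length ls' = ar f" "1 \<le> j" "j \<le> length conds'" "length cs' = m f"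
    "set cs' \<subseteq> {hconst Bot, hconst Top}"
    "\<forall>x\<in>vars (Fun f ls') \<union> \<Union> (set (map (vars \<circ> snd) (take (j - 1) conds'))). G (\<sigma>' x)"
    "G u"
    using assms(1) by (cases rule: good.cases) auto
  then have eq: "ls' = ls" "conds' = conds" using assms(2) by auto
  have len: "length (map (subst \<sigma>' \<circ> emb \<circ> snd) (take (j-1) conds) @ [u]) = j" using g_cond eq by auto
  have "A = map (subst \<sigma>' \<circ> emb) ls \<and> repl_at B i C = repl_at cs' i (map (subst \<sigma>' \<circ> emb \<circ> snd) (take (j-1) conds) @ [u])"
    using g_cond eq assms(5) by (simp add: append_eq_append_conv)
  moreover note repl_eq[OF _ assms(3) _ _ conjunct2[OF this]]
  ultimately show ?thesis using g_cond eq assms len by (intro exI[of _ \<sigma>'] exI[of _ u] exI[of _ cs']) auto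
qed

lemma sig_good: "constructor_term R l \<Longrightarrow> wf_term F ar l \<Longrightarrow> \<forall>x\<in>vars l. G (\<sigma>' x) \<Longrightarrow>
   subst \<sigma> (emb l) = subst \<sigma>' (emb l) \<Longrightarrow> \<forall>x\<in>vars l. G (\<sigma> x)"
  using good_emb_inv good_emb by metis

lemma sig_ls: "\<forall>l\<in>set ls. constructor_term R l \<Longrightarrow> \<forall>s\<in>set (map (subst \<sigma> \<circ> emb) ls). G s \<Longrightarrow> \<forall>x\<in>vars (Fun f ls). G (\<sigma> x)"
  using good_emb_inv by fastforce


lemma subst_Var_comp[simp]: "subst \<sigma> \<circ> Var = \<sigma>" by (rule ext) simp

lemma flags_repl: "set B \<subseteq> {hconst Bot, hconst Top} \<Longrightarrow> c \<in> {Bot, Top} \<Longrightarrow> set (repl_at B i [hconst c]) \<subseteq> {hconst Bot, hconst Top}"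
  using set_repl[of B i "[hconst c]"] by auto

lemma pres1: assumes "1 \<le> i" "i \<le> m f" "enum f ! (i-1) = (Fun f ls, r, [])" "length xs = m f"
  and "G (subst \<sigma> (Fun (Orig f) (map emb ls @ repl_at (map Var xs) i [hconst Top])))"
  shows "G (subst \<sigma> (xi m Top r))"
proof -
  note P = rule_props[OF assms(1-3)]
  have d: "defined R f" using defined_of assms by blast
  have "G (Fun (Orig f) (map (subst \<sigma> \<circ> emb) ls @ repl_at (map \<sigma> xs) i [hconst Top]))" using assms(5) by simp
  then have "\<forall>s\<in>set (map (subst \<sigma> \<circ> emb) ls). G s" using inv_orig d P(2) by (metis length_map)
  then have g: "\<forall>x\<in>vars (Fun f ls). G (\<sigma> x)" using sig_ls P(3) by blast
  show ?thesis by (rule good_xi) (use P(4) P(9) g in auto)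
qed

lemma pres2: assumes "1 \<le> i" "i \<le> m f" "enum f ! (i-1) = (Fun f ls, r, cs)" "cs \<noteq> []" "length xs = m f"
  and "G (subst \<sigma> (Fun (Orig f) (map emb ls @ repl_at (map Var xs) i [hconst Top])))"
  shows "G (subst \<sigma> (Fun (Cond f i 1) (map emb ls @ repl_at (map Var xs) i [xi m Top (fst (cs ! 0))])))"
proof -
  note P = rule_props[OF assms(1-3)]
  have d: "defined R f" using defined_of assms by blast
  have "G (Fun (Orig f) (map (subst \<sigma> \<circ> emb) ls @ repl_at (map \<sigma> xs) i [hconst Top]))" using assms(6) by simp
  then have I: "(\<forall>s\<in>set (map (subst \<sigma> \<circ> emb) ls). G s) \<and> set (repl_at (map \<sigma> xs) i [hconst Top]) \<subseteq> {hconst Bot, hconst Top}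
     \<and> length (repl_at (map \<sigma> xs) i [hconst Top]) = m f" using inv_orig d P(2) by (metis length_map)
  then have g: "\<forall>x\<in>vars (Fun f ls). G (\<sigma> x)" using sig_ls P(3) by blast
  have a1: "wf_term F ar (fst (cs!0))" using P(5) assms(4) by (cases cs) auto
  have "vars (fst (cs!0)) \<subseteq> vars (Fun f ls)" using P(10) assms(4) by force
  then have gu: "G (subst \<sigma> (xi m Top (fst (cs!0))))" using g by (intro good_xi a1) auto
  have "G (Fun (Cond f i 1) (map (subst \<sigma> \<circ> emb) ls @ repl_at (repl_at (map \<sigma> xs) i [hconst Top]) i
      (map (subst \<sigma> \<circ> emb \<circ> snd) (take (1-1) cs) @ [subst \<sigma> (xi m Top (fst (cs!0)))])))"
    by (rule g_cond[where r=r]) (use I g gu assms P(2) in \<open>auto simp: Suc_le_eq\<close>)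
  then show ?thesis using assms(1,2,5) by (simp add: repl_repl)
qed


lemma map_take_last: "1 \<le> j \<Longrightarrow> j \<le> length cs \<Longrightarrow> map g (take j cs) = map g (take (j-1) cs) @ [g (cs!(j-1))]"
  using take_Suc_conv_app_nth[of "j-1" cs] by simp

lemma set_take_last: "1 \<le> j \<Longrightarrow> j \<le> length cs \<Longrightarrow> set (take j cs) = set (take (j-1) cs) \<union> {cs!(j-1)}"
  using take_Suc_conv_app_nth[of "j-1" cs] by (cases j) auto

lemma cond_sigma: assumes "1 \<le> i" "i \<le> m f" "enum f!(i-1) = (Fun f ls, r, cs)" "length xs = m f" "1 \<le> j" "j \<le> length cs"
 "G (Fun (Cond f i j) (map (subst \<sigma> \<circ> emb) ls @ repl_at (map \<sigma> xs) i (map (subst \<sigma> \<circ> emb \<circ> snd) (take (j-1) cs) @ [w])))"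
 shows "\<forall>x\<in>vars (Fun f ls) \<union> \<Union> (set (map (vars \<circ> snd) (take (j-1) cs))). G (\<sigma> x)" "G w"
   "\<exists>cs'. set cs' \<subseteq> {hconst Bot, hconst Top} \<and> length cs' = m f \<and> take (i-1) (map \<sigma> xs) = take (i-1) cs' \<and> drop i (map \<sigma> xs) = drop i cs'"
proof -
  note P = rule_props[OF assms(1-3)]
  obtain \<sigma>' u cs' where I: "map (subst \<sigma> \<circ> emb) ls = map (subst \<sigma>' \<circ> emb) ls"
    "map (subst \<sigma> \<circ> emb \<circ> snd) (take (j-1) cs) @ [w] = map (subst \<sigma>' \<circ> emb \<circ> snd) (take (j-1) cs) @ [u]"
    "G u" "\<forall>x\<in>vars (Fun f ls) \<union> \<Union> (set (map (vars \<circ> snd) (take (j-1) cs))). G (\<sigma>' x)"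
    "take (i-1) (map \<sigma> xs) = take (i-1) cs'" "drop i (map \<sigma> xs) = drop i cs'" "set cs' \<subseteq> {hconst Bot, hconst Top}" "length cs' = m f"
    using inv_cond[OF assms(7,3,1,2)] assms(4,5,6) by (auto simp: Suc_le_eq)
  from I(2) have wu: "w = u" and M: "map (subst \<sigma> \<circ> emb \<circ> snd) (take (j-1) cs) = map (subst \<sigma>' \<circ> emb \<circ> snd) (take (j-1) cs)" by auto
  show "G w" using wu I(3) by simp
  show "\<exists>cs'. set cs' \<subseteq> {hconst Bot, hconst Top} \<and> length cs' = m f \<and> take (i-1) (map \<sigma> xs) = take (i-1) cs' \<and> drop i (map \<sigma> xs) = drop i cs'"
    using I by blast
  show "\<forall>x\<in>vars (Fun f ls) \<union> \<Union> (set (map (vars \<circ> snd) (take (j-1) cs))). G (\<sigma> x)"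
  proof
    fix x assume x: "x \<in> vars (Fun f ls) \<union> \<Union> (set (map (vars \<circ> snd) (take (j-1) cs)))"
    show "G (\<sigma> x)"
    proof (cases "x \<in> vars (Fun f ls)")
      case True
      then obtain l where l: "l \<in> set ls" "x \<in> vars l" by auto
      have "subst \<sigma> (emb l) = subst \<sigma>' (emb l)" using I(1) l(1) by (auto simp: map_eq_conv)
      moreover have "\<forall>y\<in>vars l. G (\<sigma>' y)" using I(4) l(1) by auto
      ultimately show ?thesis using sig_good[of l \<sigma>' \<sigma>] P(3) l by blast
    next
      case False
      then obtain c where c: "c \<in> set (take (j-1) cs)" "x \<in> vars (snd c)" using x by auto
      have cc: "c \<in> set cs" using c(1) in_set_takeD by fast
      have "subst \<sigma> (emb (snd c)) = subst \<sigma>' (emb (snd c))" using M c(1) by (auto simp: map_eq_conv)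
      moreover have "\<forall>y\<in>vars (snd c). G (\<sigma>' y)" using I(4) c(1) by auto
      moreover have "constructor_term R (snd c)" "wf_term F ar (snd c)" using P(5) cc by auto
      ultimately show ?thesis using sig_good[of "snd c" \<sigma>' \<sigma>] c by blast
    qed
  qed
qed

lemma pres3: assumes "1 \<le> i" "i \<le> m f" "enum f ! (i-1) = (Fun f ls, r, cs)" "cs \<noteq> []" "length xs = m f"
  and "G (subst \<sigma> (Fun (Cond f i (length cs)) (map emb ls @ repl_at (map Var xs) i (map (emb \<circ> snd) cs))))"
  shows "G (subst \<sigma> (xi m Top r))"
proof -
  note P = rule_props[OF assms(1-3)]
  define j where "j = length cs"
  have j: "1 \<le> j" "j \<le> length cs" using assms(4) by (auto simp: j_def Suc_le_eq)
  have e: "map (subst \<sigma> \<circ> emb \<circ> snd) cs = map (subst \<sigma> \<circ> emb \<circ> snd) (take (j-1) cs) @ [subst \<sigma> (emb (snd (cs!(j-1))))]"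
    using map_take_last[OF j, of "subst \<sigma> \<circ> emb \<circ> snd"] by (simp add: j_def)
  have H: "G (Fun (Cond f i j) (map (subst \<sigma> \<circ> emb) ls @ repl_at (map \<sigma> xs) i (map (subst \<sigma> \<circ> emb \<circ> snd) (take (j-1) cs) @ [subst \<sigma> (emb (snd (cs!(j-1))))])))"
    using assms(6) unfolding e[symmetric] by (simp add: j_def comp_assoc)
  note S = cond_sigma[OF assms(1,2,3,5) j H]
  have bj: "cs!(j-1) \<in> set cs" using j by auto
  have gb: "\<forall>x\<in>vars (snd (cs!(j-1))). G (\<sigma> x)" using good_emb_inv S(2) P(5) bj by fastforce
  have "set cs = set (take (j-1) cs) \<union> {cs!(j-1)}" using set_take_last[OF j] by (simp add: j_def)
  then have "\<forall>x\<in>vars (Fun f ls) \<union> \<Union> (set (map (vars \<circ> snd) cs)). G (\<sigma> x)" using S(1) gb by auto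
  then show ?thesis by (intro good_xi) (use P(4) P(9) in auto)
qed

lemma pres4: assumes "1 \<le> i" "i \<le> m f" "enum f ! (i-1) = (Fun f ls, r, cs)" "1 \<le> j" "j < length cs" "length xs = m f"
  and "G (subst \<sigma> (Fun (Cond f i j) (map emb ls @ repl_at (map Var xs) i (map (emb \<circ> snd) (take j cs)))))"
  shows "G (subst \<sigma> (Fun (Cond f i (Suc j)) (map emb ls @ repl_at (map Var xs) i
          (map (emb \<circ> snd) (take j cs) @ [xi m Top (fst (cs ! j))]))))"
proof -
  note P = rule_props[OF assms(1-3)]
  have j: "1 \<le> j" "j \<le> length cs" using assms(4,5) by auto
  have e: "map (subst \<sigma> \<circ> emb \<circ> snd) (take j cs) = map (subst \<sigma> \<circ> emb \<circ> snd) (take (j-1) cs) @ [subst \<sigma> (emb (snd (cs!(j-1))))]"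
    using map_take_last[OF j, of "subst \<sigma> \<circ> emb \<circ> snd"] by simp
  have H: "G (Fun (Cond f i j) (map (subst \<sigma> \<circ> emb) ls @ repl_at (map \<sigma> xs) i (map (subst \<sigma> \<circ> emb \<circ> snd) (take (j-1) cs) @ [subst \<sigma> (emb (snd (cs!(j-1))))])))"
    using assms(7) unfolding e[symmetric] by (simp add: comp_assoc)
  note S = cond_sigma[OF assms(1,2,3,6) j H]
  obtain cs' where cs': "set cs' \<subseteq> {hconst Bot, hconst Top}" "length cs' = m f" "take (i-1) (map \<sigma> xs) = take (i-1) cs'" "drop i (map \<sigma> xs) = drop i cs'"
    using S(3) by blast
  have bj: "cs!(j-1) \<in> set cs" using j by auto
  have gb: "\<forall>x\<in>vars (snd (cs!(j-1))). G (\<sigma> x)" using good_emb_inv S(2) P(5) bj by fastforce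
  have "set (take j cs) = set (take (j-1) cs) \<union> {cs!(j-1)}" using set_take_last[OF j] by simp
  then have gs: "\<forall>x\<in>vars (Fun f ls) \<union> \<Union> (set (map (vars \<circ> snd) (take j cs))). G (\<sigma> x)" using S(1) gb by auto
  have aj: "wf_term F ar (fst (cs!j))" using P(5) assms(5) nth_mem[OF assms(5)] by (cases "cs!j") fastforce
  have gu: "G (subst \<sigma> (xi m Top (fst (cs!j))))"
    by (intro good_xi aj) (use gs P(10)[rule_format, OF assms(5)] in auto)
  have "G (Fun (Cond f i (Suc j)) (map (subst \<sigma> \<circ> emb) ls @ repl_at cs' i (map (subst \<sigma> \<circ> emb \<circ> snd) (take (Suc j - 1) cs) @ [subst \<sigma> (xi m Top (fst (cs!j)))])))"
    by (rule g_cond[where r=r]) (use assms P(2) cs' gs gu in \<open>auto simp: Suc_le_eq\<close>)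
  moreover have "repl_at cs' i X = repl_at (map \<sigma> xs) i X" for X using repl_cong cs'(3,4) by metis
  ultimately show ?thesis by (simp add: comp_assoc)
qed

lemma pres5: assumes "1 \<le> i" "i \<le> m f" "enum f ! (i-1) = (Fun f ls, r, cs)" "1 \<le> j" "j \<le> length cs" "length xs = m f"
  and "G (subst \<sigma> (Fun (Cond f i j) (map emb ls @ repl_at (map Var xs) i
          (map (emb \<circ> snd) (take (j - 1) cs) @ [v]))))"
  shows "G (subst \<sigma> (Fun (Orig f) (map emb ls @ repl_at (map Var xs) i [hconst Bot])))"
proof -
  note P = rule_props[OF assms(1-3)]
  have H: "G (Fun (Cond f i j) (map (subst \<sigma> \<circ> emb) ls @ repl_at (map \<sigma> xs) i (map (subst \<sigma> \<circ> emb \<circ> snd) (take (j-1) cs) @ [subst \<sigma> v])))"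
    using assms(7) by (simp add: comp_assoc)
  note S = cond_sigma[OF assms(1,2,3,6,4,5) H]
  obtain cs' where cs': "set cs' \<subseteq> {hconst Bot, hconst Top}" "length cs' = m f" "take (i-1) (map \<sigma> xs) = take (i-1) cs'" "drop i (map \<sigma> xs) = drop i cs'"
    using S(3) by blast
  have ss: "\<forall>s\<in>set (map (subst \<sigma> \<circ> emb) ls). G s" using S(1) P(3) good_emb by fastforce
  have "G (Fun (Orig f) (map (subst \<sigma> \<circ> emb) ls @ repl_at cs' i [hconst Bot]))"
    by (rule g_def) (use P(1,2) ss cs' assms(1,2) defined_of flags_repl[OF cs'(1), of Bot i] in auto)
  moreover have "repl_at cs' i X = repl_at (map \<sigma> xs) i X" for X using repl_cong cs'(3,4) by metis
  ultimately show ?thesis by simp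
qed

lemma pres6: assumes "1 \<le> i" "i \<le> m f" "enum f ! (i-1) = (Fun f ls, r, cs)" "1 \<le> j" "j \<le> length ls" "length xs = m f"
  "length ys = length ls"
  and "G (subst \<sigma> (Fun (Orig f) (repl_at (map Var ys) j [v] @ repl_at (map Var xs) i [hconst Top])))"
  shows "G (subst \<sigma> (Fun (Orig f) (repl_at (map Var ys) j [v] @ repl_at (map Var xs) i [hconst Bot])))"
proof -
  note P = rule_props[OF assms(1-3)]
  have d: "defined R f" using defined_of assms by blast
  have H: "G (Fun (Orig f) (repl_at (map \<sigma> ys) j [subst \<sigma> v] @ repl_at (map \<sigma> xs) i [hconst Top]))"
    using assms(8) by simp
  have len: "length (repl_at (map \<sigma> ys) j [subst \<sigma> v]) = ar f" using assms(4,5,7) P(2) by simp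
  note I = inv_orig[OF H d len]
  have fl: "set (repl_at (repl_at (map \<sigma> xs) i [hconst Top]) i [hconst Bot]) \<subseteq> {hconst Bot, hconst Top}"
    using flags_repl I by blast
  have ln: "length (repl_at (repl_at (map \<sigma> xs) i [hconst Top]) i [hconst Bot]) = m f"
    using assms(1,2,6) by (simp add: repl_repl)
  have "G (Fun (Orig f) (repl_at (map \<sigma> ys) j [subst \<sigma> v] @ repl_at (repl_at (map \<sigma> xs) i [hconst Top]) i [hconst Bot]))"
    by (rule g_def) (use I len d P(1) fl ln in auto)
  then show ?thesis using assms(1,2,6) by (simp add: repl_repl)
qed

lemma root_pres: assumes "(l, r) \<in> Xi F ar R enum" "G (subst \<sigma> l)" shows "G (subst \<sigma> r)"
  using assms(1)
proof (cases rule: Xi.cases)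
  case Xi1 thus ?thesis using assms(2) pres1 by metis
next
  case Xi2 thus ?thesis using assms(2) pres2 by metis
next
  case Xi3 thus ?thesis using assms(2) pres3 by metis
next
  case Xi4 thus ?thesis using assms(2) pres4 by metis
next
  case Xi5 thus ?thesis using assms(2) pres5 by metis
next
  case Xi6 thus ?thesis using assms(2) pres6 by metis
qed


lemma arg_cond_idx: assumes "length A = n" "1 \<le> i'" "i' \<le> length cs" "length X = j - 1" "1 \<le> j"
  shows "(A @ repl_at cs i' (X @ [u0])) ! (n + i' + j - 1 - 1) = u0"
    "(A @ repl_at cs i' (X @ [u0]))[n + i' + j - 1 - 1 := u] = A @ repl_at cs i' (X @ [u])"
proof -
  have l: "length (take (i'-1) cs) = i' - 1" using assms by simp
  have e: "n + i' + j - 1 - 1 = length A + (length (take (i'-1) cs) + length X)" using assms l by simp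
  show "(A @ repl_at cs i' (X @ [u0])) ! (n + i' + j - 1 - 1) = u0"
    unfolding e repl_at_def by (simp add: nth_append del: length_take)
  show "(A @ repl_at cs i' (X @ [u0]))[n + i' + j - 1 - 1 := u] = A @ repl_at cs i' (X @ [u])"
    unfolding e repl_at_def by (simp add: list_update_append del: length_take)
qed

lemma arg_pres: assumes "G (Fun g ts)" "i \<in> mu ar g" "1 \<le> i" "i \<le> length ts" "G (ts!(i-1)) \<Longrightarrow> G u"
  shows "G (Fun g (ts[i-1 := u]))"
  using assms(1)
proof (cases rule: good.cases)
  case g_con
  then show ?thesis using assms by (auto intro!: good.g_con dest!: set_update_subset_insert[THEN subsetD])
next
  case (g_def f ss cs)
  then have "i - 1 < length ss" using assms(2,3) by auto
  then show ?thesis using g_def assms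
    by (auto simp: list_update_append nth_append intro!: good.g_def dest!: set_update_subset_insert[THEN subsetD])
next
  case (g_cond i' f ls r conds j cs \<sigma> u0)
  have i: "i = length (map (subst \<sigma> \<circ> emb) ls) + i' + j - 1" using g_cond assms(2) by simp
  have len: "length (map (subst \<sigma> \<circ> emb \<circ> snd) (take (j - 1) conds)) = j - 1" using g_cond by simp
  note IX1 = arg_cond_idx(1)[of "map (subst \<sigma> \<circ> emb) ls" "length (map (subst \<sigma> \<circ> emb) ls)" i' cs "map (subst \<sigma> \<circ> emb \<circ> snd) (take (j - 1) conds)" j u0]
  note IX2 = arg_cond_idx(2)[of "map (subst \<sigma> \<circ> emb) ls" "length (map (subst \<sigma> \<circ> emb) ls)" i' cs "map (subst \<sigma> \<circ> emb \<circ> snd) (take (j - 1) conds)" j u0 u]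
  have "G u0" using g_cond by simp
  then have "G u" using assms(5) IX1 g_cond i len by simp
  then have "G (Fun (Cond f i' j) (map (subst \<sigma> \<circ> emb) ls @ repl_at cs i' (map (subst \<sigma> \<circ> emb \<circ> snd) (take (j - 1) conds) @ [u])))"
    by (intro good.g_cond[where r=r]) (use g_cond in auto)
  then show ?thesis using g_cond i IX2 len by simp
qed

lemma step_pres: "cs_step F ar R enum s t \<Longrightarrow> G s \<Longrightarrow> G t"
proof (induction rule: cs_step.induct)
  case (cs_root l r \<sigma>) thus ?case using root_pres by blast
next
  case (cs_arg i g ts u) thus ?case using arg_pres by blast
qed

lemma steps_pres: "(cs_step F ar R enum)\<^sup>*\<^sup>* s t \<Longrightarrow> G s \<Longrightarrow> G t"
  by (induction rule: rtranclp_induct) (auto intro: step_pres)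

end


lemma finite_rule_vars: "finite (rule_vars \<rho>)"
  unfolding rule_vars_def by (auto split: prod.split)

lemma rule_vars_lhs: "vars (Fun f ls) \<subseteq> rule_vars (Fun f ls, r, conds)"
  unfolding rule_vars_def rlhs_def by auto

lemma rule_vars_cond: "c \<in> set conds \<Longrightarrow> vars (snd c) \<subseteq> rule_vars (Fun f ls, r, conds)"
  unfolding rule_vars_def rconds_def by (cases c) force

lemma linear_arg: "linear (Fun f ts) \<Longrightarrow> t \<in> set ts \<Longrightarrow> linear t"
  by (auto simp: linear_def distinct_concat_iff)

lemma choose_list: "\<forall>s\<in>set ss. \<exists>t'. Q s t' \<Longrightarrow> \<exists>ts'. length ts' = length ss \<and> (\<forall>k<length ss. Q (ss!k) (ts'!k))"
  by (intro exI[of _ "map (\<lambda>s. SOME t'. Q s t') ss"]) (auto intro: someI_ex)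

context L begin

lemma match_or_ap: "constructor_term R l \<Longrightarrow> wf_term F ar l \<Longrightarrow> linear l \<Longrightarrow> wf_term F ar (w::('f,'v) trm) \<Longrightarrow> vars w = {} \<Longrightarrow> finite V \<Longrightarrow>
 (\<exists>\<sigma>. subst \<sigma> (emb l) = xi m Bot w) \<or> (\<exists>v \<sigma>. AP F ar R m l v \<and> vars v \<inter> V = {} \<and> subst \<sigma> v = xi m Bot w)"
proof (induction l arbitrary: w)
  case (Var x) thus ?case by (intro disjI1 exI[of _ "\<lambda>_. xi m Bot w"]) simp
next
  case (Fun f ts)
  obtain g ws where w: "w = Fun g ws" using Fun.prems(5) by (cases w) auto
  have nf: "\<not> defined R f" and cts: "\<forall>t\<in>set ts. constructor_term R t" using Fun.prems(1) by (auto simp: ct_Fun)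
  have g: "g \<in> F" "length ws = ar g" "\<forall>w\<in>set ws. wf_term F ar w \<and> vars w = {}" using Fun.prems(4,5) w by auto
  show ?case
  proof (cases "defined R g")
    case True
    obtain xs where xs: "length xs = ar g" "distinct xs" "set xs \<inter> V = {}" using fresh_list[OF inf Fun.prems(6)] by blast
    define v where "v = Fun (Orig g) (map Var xs @ replicate (m g) (hconst Bot))"
    have "AP F ar R m (Fun f ts) v" unfolding v_def by (rule AP_def) (use g True xs in auto)
    moreover have "subst (upd Var xs (map (xi m Bot) ws)) v = xi m Bot w"
      unfolding v_def w using upd_map[OF xs(2), of "map (xi m Bot) ws" Var] xs(1) g(2)
      by (simp add: map_replicate_const)
    moreover have "vars v \<inter> V = {}" using xs by (auto simp: v_def)
    ultimately show ?thesis by blast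
  next
    case nd: False
    show ?thesis
    proof (cases "g = f")
      case False
      obtain xs where xs: "length xs = ar g" "distinct xs" "set xs \<inter> V = {}" using fresh_list[OF inf Fun.prems(6)] by blast
      define v where "v = Fun (Orig g) (map Var xs)"
      have "AP F ar R m (Fun f ts) v" unfolding v_def by (rule AP_con) (use g nd False xs in auto)
      moreover have "subst (upd Var xs (map (xi m Bot) ws)) v = xi m Bot w"
        unfolding v_def w using upd_map[OF xs(2), of "map (xi m Bot) ws" Var] xs(1) g(2) mf0[OF nd]
        by simp
      moreover have "vars v \<inter> V = {}" using xs by (auto simp: v_def)
      ultimately show ?thesis by blast
    next
      case True
      have m0: "m f = 0" using mf0[OF nf] .
      have lts: "length ts = length ws" using Fun.prems(2) g(2) True by simp
      have lin: "distinct (concat (map vars_list ts))" using Fun.prems(3) by (simp add: linear_def)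
      show ?thesis
      proof (cases "\<forall>k<length ts. \<exists>\<sigma>. subst \<sigma> (emb (ts!k)) = xi m Bot (ws!k)")
        case all: True
        have "\<exists>\<sigma>. map (subst \<sigma>) (map emb ts) = map (xi m Bot) ws"
          by (rule combine) (use lin lts all in \<open>auto simp: comp_def\<close>)
        then obtain \<sigma> where "map (subst \<sigma>) (map emb ts) = map (xi m Bot) ws" by blast
        then have "subst \<sigma> (emb (Fun f ts)) = xi m Bot w" using w True m0 by simp
        then show ?thesis by blast
      next
        case False
        then obtain k where k: "k < length ts" and nm: "\<not> (\<exists>\<sigma>. subst \<sigma> (emb (ts!k)) = xi m Bot (ws!k))" by blast
        have tk: "ts!k \<in> set ts" using k by simp
        have wk: "ws!k \<in> set ws" using k lts by simp
        have "(\<exists>\<sigma>. subst \<sigma> (emb (ts!k)) = xi m Bot (ws!k)) \<or> (\<exists>v \<sigma>. AP F ar R m (ts!k) v \<and> vars v \<inter> V = {} \<and> subst \<sigma> v = xi m Bot (ws!k))"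
          by (rule Fun.IH[OF tk]) (use cts tk Fun.prems(2,6) linear_arg[OF Fun.prems(3) tk] g(3) wk in auto)
        then obtain v \<sigma> where v: "AP F ar R m (ts!k) v" "vars v \<inter> V = {}" "subst \<sigma> v = xi m Bot (ws!k)" using nm by blast
        obtain xs where xs: "length xs = length ts" "distinct xs" "set xs \<inter> (V \<union> vars v) = {}"
          using fresh_list[OF inf, of "V \<union> vars v"] Fun.prems(6) by auto
        define p where "p = Fun (Orig f) (repl_at (map Var xs) (Suc k) [v])"
        have "AP F ar R m (Fun f ts) p" unfolding p_def by (rule AP_arg) (use k v xs in auto)
        moreover have "vars p \<inter> V = {}"
        proof -
          have "vars p \<subseteq> set xs \<union> vars v" unfolding p_def using set_repl[of "map Var xs" "Suc k" "[v]"] by (auto simp del: map_repl_at)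
          then show ?thesis using xs v by auto
        qed
        moreover have "subst (upd \<sigma> xs (map (xi m Bot) ws)) p = xi m Bot w"
        proof -
          have "subst (upd \<sigma> xs (map (xi m Bot) ws)) v = xi m Bot (ws!k)" using subst_upd[of v xs \<sigma>] xs(3) v(3) by auto
          moreover have "map (upd \<sigma> xs (map (xi m Bot) ws)) xs = map (xi m Bot) ws" using upd_map[OF xs(2), of "map (xi m Bot) ws" \<sigma>] xs(1) lts by simp
          ultimately have "subst (upd \<sigma> xs (map (xi m Bot) ws)) p = Fun (Orig f) (repl_at (map (xi m Bot) ws) (Suc k) [(map (xi m Bot) ws) ! (Suc k - 1)])"
            unfolding p_def using k lts by simp
          also have "\<dots> = Fun (Orig f) (map (xi m Bot) ws)" using repl_nth[of "Suc k" "map (xi m Bot) ws"] k lts by simp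
          finally show ?thesis using w True m0 by simp
        qed
        ultimately show ?thesis by blast
      qed
    qed
  qed
qed


lemma top_red: assumes "1 \<le> i" "i \<le> m f" "length ts' = ar f" "\<forall>t\<in>set ts'. wf_term F ar t \<and> vars t = {}"
  "length cs = m f" "cs!(i-1) = hconst Top"
  shows "\<exists>u. cs_step F ar R enum (Fun (Orig f) (map (xi m Bot) ts' @ cs)) u"
proof -
  obtain ls r conds where rho: "enum f!(i-1) = (Fun f ls, r, conds)" using rule_shape assms by blast
  note P = rule_props[OF assms(1,2) rho]
  have lin: "distinct (concat (map vars_list ls))" using P(6) by (simp add: linear_def)
  have lls: "length ls = length ts'" using P(2) assms(3) by simp
  have csr: "repl_at cs i [hconst Top] = cs" using repl_nth[of i cs] assms by simp
  show ?thesis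
  proof (cases "\<forall>k<length ls. \<exists>\<sigma>. subst \<sigma> (emb (ls!k)) = xi m Bot (ts'!k)")
    case True
    have "\<exists>\<sigma>. map (subst \<sigma>) (map emb ls) = map (xi m Bot) ts'"
      by (rule combine) (use lin lls True in \<open>auto simp: comp_def\<close>)
    then obtain \<sigma>l where \<sigma>l: "map (subst \<sigma>l) (map emb ls) = map (xi m Bot) ts'" by blast
    obtain xs where xs: "length xs = m f" "distinct xs" "set xs \<inter> rule_vars (enum f ! (i-1)) = {}"
      using fresh_list[OF inf finite_rule_vars] by blast
    define \<sigma> where "\<sigma> = upd \<sigma>l xs cs"
    have "\<forall>l\<in>set ls. subst \<sigma> (emb l) = subst \<sigma>l (emb l)"
    proof
      fix l assume l: "l \<in> set ls"
      have "vars (emb l) \<inter> set xs = {}" using xs(3) rule_vars_lhs[of f ls r conds] rho l by auto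
      then show "subst \<sigma> (emb l) = subst \<sigma>l (emb l)" unfolding \<sigma>_def by (rule subst_upd)
    qed
    then have "map (subst \<sigma> \<circ> emb) ls = map (subst \<sigma>l \<circ> emb) ls" by (simp add: map_eq_conv)
    also have "\<dots> = map (xi m Bot) ts'" using \<sigma>l by simp
    finally have e1: "map (subst \<sigma> \<circ> emb) ls = map (xi m Bot) ts'" .
    have e2: "map \<sigma> xs = cs" using upd_map[OF xs(2), of cs \<sigma>l] xs(1) assms(5) unfolding \<sigma>_def by simp
    define L where "L = Fun (Orig f) (map emb ls @ repl_at (map Var xs) i [hconst Top])"
    have sL: "subst \<sigma> L = Fun (Orig f) (map (xi m Bot) ts' @ cs)" unfolding L_def using e1 e2 csr by simp
    show ?thesis
    proof (cases "conds = []")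
      case True
      have "(L, xi m Top r) \<in> Xi F ar R enum" unfolding L_def
        by (rule Xi1) (use assms(1,2) rho True xs in auto)
      then show ?thesis using cs_root sL by metis
    next
      case False
      have "(L, Fun (Cond f i 1) (map emb ls @ repl_at (map Var xs) i [xi m Top (fst (conds ! 0))])) \<in> Xi F ar R enum"
        unfolding L_def by (rule Xi2[where r=r]) (use assms(1,2) rho False xs in auto)
      then show ?thesis using cs_root sL by metis
    qed
  next
    case False
    then obtain k where k: "k < length ls" and nm: "\<not>(\<exists>\<sigma>. subst \<sigma> (emb (ls!k)) = xi m Bot (ts'!k))" by blast
    have lk: "ls!k \<in> set ls" using k by simp
    have tk: "ts'!k \<in> set ts'" using k lls by simp
    have "(\<exists>\<sigma>. subst \<sigma> (emb (ls!k)) = xi m Bot (ts'!k)) \<or> (\<exists>v \<sigma>. AP F ar R m (ls!k) v \<and> vars v \<inter> {} = {} \<and> subst \<sigma> v = xi m Bot (ts'!k))"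
      by (rule match_or_ap) (use P(3) lk linear_arg[OF P(6) lk] assms(4) tk in auto)
    then obtain v \<sigma>v where v: "AP F ar R m (ls!k) v" "subst \<sigma>v v = xi m Bot (ts'!k)" using nm by blast
    obtain zs where zs: "length zs = m f + length ls" "distinct zs" "set zs \<inter> vars v = {}"
      using fresh_list[OF inf, of "vars v"] by auto
    define xs where "xs = take (m f) zs"
    define ys where "ys = drop (m f) zs"
    have xsys: "xs @ ys = zs" "length xs = m f" "length ys = length ls" using zs(1) by (auto simp: xs_def ys_def)
    have sz: "set xs \<union> set ys = set zs" using xsys(1) by (metis set_append)
    define \<sigma> where "\<sigma> = upd \<sigma>v zs (cs @ map (xi m Bot) ts')"
    have "map \<sigma> zs = cs @ map (xi m Bot) ts'" unfolding \<sigma>_def using upd_map[OF zs(2), of "cs @ map (xi m Bot) ts'" \<sigma>v] zs(1) assms(5) lls by simp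
    then have "map \<sigma> xs @ map \<sigma> ys = cs @ map (xi m Bot) ts'" using xsys(1) by (metis map_append)
    then have e: "map \<sigma> xs = cs" "map \<sigma> ys = map (xi m Bot) ts'" using xsys assms(5) by (auto simp: append_eq_append_conv)
    have ev: "subst \<sigma> v = xi m Bot (ts'!k)" using subst_upd[of v zs \<sigma>v] zs(3) v(2) unfolding \<sigma>_def by (auto simp: Int_commute)
    define L where "L = Fun (Orig f) (repl_at (map Var ys) (Suc k) [v] @ repl_at (map Var xs) i [hconst Top])"
    have sL: "subst \<sigma> L = Fun (Orig f) (map (xi m Bot) ts' @ cs)"
    proof -
      have "subst \<sigma> L = Fun (Orig f) (repl_at (map (xi m Bot) ts') (Suc k) [(map (xi m Bot) ts')!(Suc k - 1)] @ repl_at cs i [hconst Top])"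
        unfolding L_def using e ev k lls by simp
      also have "\<dots> = Fun (Orig f) (map (xi m Bot) ts' @ cs)" using repl_nth[of "Suc k" "map (xi m Bot) ts'"] k lls csr by simp
      finally show ?thesis .
    qed
    have "(L, Fun (Orig f) (repl_at (map Var ys) (Suc k) [v] @ repl_at (map Var xs) i [hconst Bot])) \<in> Xi F ar R enum"
      unfolding L_def by (rule Xi6[where r=r and cs=conds]) (use assms(1,2) rho k v xsys zs sz in auto)
    then show ?thesis using cs_root sL by metis
  qed
qed

end

context L begin

lemma cond_red: assumes "1 \<le> i" "i \<le> m f" "enum f ! (i-1) = (Fun f ls, r, conds)" "1 \<le> j" "j \<le> length conds"
  "length cs = m f" "wf_term F ar u'" "vars u' = {}"
 shows "\<exists>t. cs_step F ar R enum (Fun (Cond f i j) (map (subst \<sigma>0 \<circ> emb) ls @ repl_at cs i (map (subst \<sigma>0 \<circ> emb \<circ> snd) (take (j-1) conds) @ [xi m Bot u']))) t"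
proof -
  note P = rule_props[OF assms(1-3)]
  define b where "b = snd (conds!(j-1))"
  have bin: "conds!(j-1) \<in> set conds" using assms(4,5) by simp
  have bp: "constructor_term R b" "wf_term F ar b" "linear b" using P(5) bin unfolding b_def by fastforce+
  have bl: "vars (Fun f ls) \<inter> vars b = {}" using P(7)[rule_format, of "j-1"] assms(4,5) by (simp add: b_def)
  have bt: "\<forall>c\<in>set (take (j-1) conds). vars (snd c) \<inter> vars b = {}"
  proof
    fix c assume "c \<in> set (take (j-1) conds)"
    then obtain k' where k': "k' < j-1" "c = conds!k'" using assms(5) by (auto simp: in_set_conv_nth)
    then show "vars (snd c) \<inter> vars b = {}" using P(8)[rule_format, of k' "j-1"] assms(4,5) by (auto simp: b_def)
  qed
  define RV where "RV = rule_vars (enum f!(i-1))"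
  have rvl: "vars (Fun f ls) \<subseteq> RV" using rule_vars_lhs assms(3) by (simp add: RV_def)
  have rvc: "\<forall>c\<in>set conds. vars (snd c) \<subseteq> RV" unfolding RV_def assms(3) by (intro ballI rule_vars_cond)
  have rvt: "\<forall>c\<in>set (take (j-1) conds). vars (snd c) \<subseteq> RV" using rvc in_set_takeD by fast
  have rvb: "vars b \<subseteq> RV" using rvc bin b_def by blast
  have finRV: "finite RV" by (simp add: RV_def finite_rule_vars)
  define T where "T = Fun (Cond f i j) (map (subst \<sigma>0 \<circ> emb) ls @ repl_at cs i (map (subst \<sigma>0 \<circ> emb \<circ> snd) (take (j-1) conds) @ [xi m Bot u']))"
  have agree: "subst (upd \<tau> xs cs) (emb t) = subst \<sigma>0 (emb t)"
    if "vars t \<inter> set xs = {}" "\<forall>x\<in>vars t. \<tau> x = \<sigma>0 x" for t xs \<tau>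
    using that by (intro subst_agree) (metis disjoint_iff upd_out vars_emb)
  from match_or_ap[OF bp assms(7,8) finRV]
  show ?thesis unfolding T_def[symmetric]
  proof
    assume "\<exists>\<sigma>. subst \<sigma> (emb b) = xi m Bot u'"
    then obtain \<sigma>u where \<sigma>u: "subst \<sigma>u (emb b) = xi m Bot u'" by blast
    obtain xs where xs: "length xs = m f" "distinct xs" "set xs \<inter> RV = {}" using fresh_list[OF inf finRV] by blast
    define \<tau> where "\<tau> x = (if x \<in> vars b then \<sigma>u x else \<sigma>0 x)" for x
    define \<sigma> where "\<sigma> = upd \<tau> xs cs"
    have e1: "map (subst \<sigma> \<circ> emb) ls = map (subst \<sigma>0 \<circ> emb) ls"
    proof -
      have "\<forall>l\<in>set ls. subst \<sigma> (emb l) = subst \<sigma>0 (emb l)"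
        using rvl xs(3) bl unfolding \<sigma>_def by (intro ballI agree) (auto simp: \<tau>_def)
      then show ?thesis by (simp add: map_eq_conv)
    qed
    have e2: "map (subst \<sigma> \<circ> emb \<circ> snd) (take (j-1) conds) = map (subst \<sigma>0 \<circ> emb \<circ> snd) (take (j-1) conds)"
    proof -
      have "\<forall>c\<in>set (take (j-1) conds). subst \<sigma> (emb (snd c)) = subst \<sigma>0 (emb (snd c))"
      proof
        fix c assume c: "c \<in> set (take (j-1) conds)"
        show "subst \<sigma> (emb (snd c)) = subst \<sigma>0 (emb (snd c))" unfolding \<sigma>_def
          by (rule agree) (use c rvt xs(3) bt in \<open>auto simp: \<tau>_def\<close>)
      qed
      then show ?thesis by (simp add: map_eq_conv)
    qed
    have e3: "subst \<sigma> (emb b) = xi m Bot u'"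
    proof -
      have "subst \<sigma> (emb b) = subst \<tau> (emb b)" unfolding \<sigma>_def using rvb xs(3) by (intro subst_upd) auto
      also have "\<dots> = subst \<sigma>u (emb b)" by (rule subst_agree) (simp add: \<tau>_def)
      finally show ?thesis using \<sigma>u by simp
    qed
    have e4: "map \<sigma> xs = cs" using upd_map[OF xs(2), of cs \<tau>] xs(1) assms(6) unfolding \<sigma>_def by simp
    have Mt: "map (subst \<sigma> \<circ> emb \<circ> snd) (take j conds) = map (subst \<sigma>0 \<circ> emb \<circ> snd) (take (j-1) conds) @ [xi m Bot u']"
      using map_take_last[OF assms(4,5), of "subst \<sigma> \<circ> emb \<circ> snd"] e2 e3 by (simp add: b_def)
    define L where "L = Fun (Cond f i j) (map emb ls @ repl_at (map Var xs) i (map (emb \<circ> snd) (take j conds)))"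
    have sL: "subst \<sigma> L = T"
    proof -
      have "subst \<sigma> L = Fun (Cond f i j) (map (subst \<sigma> \<circ> emb) ls @ repl_at (map \<sigma> xs) i (map (subst \<sigma> \<circ> emb \<circ> snd) (take j conds)))"
        unfolding L_def by (simp add: comp_assoc)
      then show ?thesis unfolding T_def using e1 e4 Mt by simp
    qed
    show "\<exists>t. cs_step F ar R enum T t"
    proof (cases "j = length conds")
      case True
      have "(Fun (Cond f i (length conds)) (map emb ls @ repl_at (map Var xs) i (map (emb \<circ> snd) conds)), xi m Top r) \<in> Xi F ar R enum"
        by (rule Xi3) (use assms xs RV_def in auto)
      then have "(L, xi m Top r) \<in> Xi F ar R enum" unfolding L_def using True by simp
      then show ?thesis using cs_root sL by metis
    next
      case False
      then have jl: "j < length conds" using assms(5) by simp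
      have "(L, Fun (Cond f i (Suc j)) (map emb ls @ repl_at (map Var xs) i
          (map (emb \<circ> snd) (take j conds) @ [xi m Top (fst (conds ! j))]))) \<in> Xi F ar R enum"
        unfolding L_def by (rule Xi4[where r=r]) (use assms xs RV_def jl in auto)
      then show ?thesis using cs_root sL by metis
    qed
  next
    assume "\<exists>v \<sigma>. AP F ar R m b v \<and> vars v \<inter> RV = {} \<and> subst \<sigma> v = xi m Bot u'"
    then obtain v \<sigma>v where v: "AP F ar R m b v" "vars v \<inter> RV = {}" "subst \<sigma>v v = xi m Bot u'" by blast
    obtain xs where xs: "length xs = m f" "distinct xs" "set xs \<inter> (RV \<union> vars v) = {}"
      using fresh_list[OF inf, of "RV \<union> vars v"] finRV by auto
    define \<tau> where "\<tau> x = (if x \<in> vars v then \<sigma>v x else \<sigma>0 x)" for x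
    define \<sigma> where "\<sigma> = upd \<tau> xs cs"
    have e1: "map (subst \<sigma> \<circ> emb) ls = map (subst \<sigma>0 \<circ> emb) ls"
    proof -
      have "\<forall>l\<in>set ls. subst \<sigma> (emb l) = subst \<sigma>0 (emb l)"
        using rvl xs(3) v(2) unfolding \<sigma>_def by (intro ballI agree) (auto simp: \<tau>_def)
      then show ?thesis by (simp add: map_eq_conv)
    qed
    have e2: "map (subst \<sigma> \<circ> emb \<circ> snd) (take (j-1) conds) = map (subst \<sigma>0 \<circ> emb \<circ> snd) (take (j-1) conds)"
    proof -
      have "\<forall>c\<in>set (take (j-1) conds). subst \<sigma> (emb (snd c)) = subst \<sigma>0 (emb (snd c))"
      proof
        fix c assume c: "c \<in> set (take (j-1) conds)"
        show "subst \<sigma> (emb (snd c)) = subst \<sigma>0 (emb (snd c))" unfolding \<sigma>_def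
          by (rule agree) (use c rvt xs(3) v(2) in \<open>auto simp: \<tau>_def\<close>)
      qed
      then show ?thesis by (simp add: map_eq_conv)
    qed
    have e3: "subst \<sigma> v = xi m Bot u'"
    proof -
      have "subst \<sigma> v = subst \<tau> v" unfolding \<sigma>_def using xs(3) by (intro subst_upd) auto
      also have "\<dots> = subst \<sigma>v v" by (rule subst_agree) (simp add: \<tau>_def)
      finally show ?thesis using v(3) by simp
    qed
    have e4: "map \<sigma> xs = cs" using upd_map[OF xs(2), of cs \<tau>] xs(1) assms(6) unfolding \<sigma>_def by simp
    define L where "L = Fun (Cond f i j) (map emb ls @ repl_at (map Var xs) i (map (emb \<circ> snd) (take (j - 1) conds) @ [v]))"
    have sL: "subst \<sigma> L = T"
    proof -
      have "subst \<sigma> L = Fun (Cond f i j) (map (subst \<sigma> \<circ> emb) ls @ repl_at (map \<sigma> xs) i (map (subst \<sigma> \<circ> emb \<circ> snd) (take (j-1) conds) @ [subst \<sigma> v]))"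
        unfolding L_def by (simp add: comp_assoc)
      then show ?thesis unfolding T_def by (simp only: e1 e2 e3 e4)
    qed
    have "(L, Fun (Orig f) (map emb ls @ repl_at (map Var xs) i [hconst Bot])) \<in> Xi F ar R enum"
      unfolding L_def by (rule Xi5[where r=r]) (use assms xs RV_def v b_def in auto)
    then show "\<exists>t. cs_step F ar R enum T t" using cs_root sL by metis
  qed
qed


lemma normal_arg: "\<not>(\<exists>u. cs_step F ar R enum (Fun g ts) u) \<Longrightarrow> i \<in> mu ar g \<Longrightarrow> 1 \<le> i \<Longrightarrow> i \<le> length ts \<Longrightarrow>
   \<not>(\<exists>u. cs_step F ar R enum (ts!(i-1)) u)"
  using cs_arg by blast

lemma args_bot: assumes "\<forall>k<length ss. \<not>(\<exists>u. cs_step F ar R enum (ss!k) u)"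
  "\<forall>s\<in>set ss. G s \<and> (\<not>(\<exists>u. cs_step F ar R enum s u) \<longrightarrow> (\<exists>t'. wf_term F ar t' \<and> vars t' = {} \<and> s = xi m Bot t'))"
  shows "\<exists>ts'. ss = map (xi m Bot) ts' \<and> (\<forall>t\<in>set ts'. wf_term F ar t \<and> vars t = {})"
proof -
  have "\<forall>s\<in>set ss. \<exists>t'. wf_term F ar t' \<and> vars t' = {} \<and> s = xi m Bot t'"
    using assms by (metis in_set_conv_nth)
  from choose_list[OF this] obtain ts' where ts': "length ts' = length ss"
    "\<forall>k<length ss. wf_term F ar (ts'!k) \<and> vars (ts'!k) = {} \<and> ss!k = xi m Bot (ts'!k)" by blast
  have "ss = map (xi m Bot) ts'" by (rule nth_equalityI) (use ts' in auto)
  moreover have "\<forall>t\<in>set ts'. wf_term F ar t \<and> vars t = {}" using ts' by (metis in_set_conv_nth)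
  ultimately show ?thesis by blast
qed

lemma nf_bot: "G t \<Longrightarrow> \<not>(\<exists>u. cs_step F ar R enum t u) \<Longrightarrow> \<exists>t'. wf_term F ar t' \<and> vars t' = {} \<and> t = xi m Bot t'"
proof (induction rule: good.induct)
  case (g_con f ss)
  have "\<forall>k<length ss. \<not>(\<exists>u. cs_step F ar R enum (ss!k) u)"
    using normal_arg[OF g_con.prems, of "Suc _"] g_con.hyps(3) by auto
  then obtain ts' where ts': "ss = map (xi m Bot) ts'" "\<forall>t\<in>set ts'. wf_term F ar t \<and> vars t = {}"
    using args_bot g_con.IH by blast
  have "wf_term F ar (Fun f ts')" using ts' g_con.hyps(1,3) by auto
  moreover have "vars (Fun f ts') = {}" using ts' by auto
  moreover have "Fun (Orig f) ss = xi m Bot (Fun f ts')" using ts'(1) mf0[OF g_con.hyps(2)] by simp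
  ultimately show ?case by blast
next
  case (g_def f ss cs)
  have "\<forall>k<length ss. \<not>(\<exists>u. cs_step F ar R enum (ss!k) u)"
  proof (intro allI impI)
    fix k assume k: "k < length ss"
    have "\<not>(\<exists>u. cs_step F ar R enum ((ss @ cs)!(Suc k - 1)) u)"
      by (rule normal_arg[OF g_def.prems]) (use k g_def.hyps(3) in auto)
    then show "\<not>(\<exists>u. cs_step F ar R enum (ss!k) u)" using k by (simp add: nth_append)
  qed
  then obtain ts' where ts': "ss = map (xi m Bot) ts'" "\<forall>t\<in>set ts'. wf_term F ar t \<and> vars t = {}"
    using args_bot g_def.IH by blast
  show ?case
  proof (cases "hconst Top \<in> set cs")
    case True
    then obtain k where k: "k < length cs" "cs!k = hconst Top" by (auto simp: in_set_conv_nth)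
    have "\<exists>u. cs_step F ar R enum (Fun (Orig f) (map (xi m Bot) ts' @ cs)) u"
      by (rule top_red[of "Suc k"]) (use k ts' g_def.hyps in auto)
    then show ?thesis using g_def.prems ts'(1) by simp
  next
    case False
    then have "\<forall>y\<in>set cs. y = hconst Bot" using g_def.hyps(5) by auto
    then have "cs = replicate (m f) (hconst Bot)" using replicate_length_same g_def.hyps(4) by metis
    then have "Fun (Orig f) (ss @ cs) = xi m Bot (Fun f ts')" using ts'(1) by simp
    moreover have "wf_term F ar (Fun f ts')" using ts' g_def.hyps(1,3) by auto
    moreover have "vars (Fun f ts') = {}" using ts' by auto
    ultimately show ?thesis by blast
  qed
next
  case (g_cond i f ls r conds j cs \<sigma> u)
  define X where "X = map (subst \<sigma> \<circ> emb \<circ> snd) (take (j-1) conds)"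
  define A where "A = map (subst \<sigma> \<circ> emb) ls"
  have lX: "length X = j - 1" using g_cond.hyps by (simp add: X_def)
  have lA: "length A = ar f" using g_cond.hyps by (simp add: A_def)
  note IX = arg_cond_idx(1)[OF lA g_cond.hyps(1) _ lX g_cond.hyps(5), of cs u]
  have "\<not>(\<exists>v. cs_step F ar R enum ((A @ repl_at cs i (X @ [u]))!(ar f + i + j - 1 - 1)) v)"
    by (rule normal_arg[OF g_cond.prems[unfolded A_def[symmetric] X_def[symmetric]]])
       (use g_cond.hyps lA lX in \<open>auto simp: repl_at_def\<close>)
  then have "\<not>(\<exists>v. cs_step F ar R enum u v)" using IX g_cond.hyps by simp
  then obtain u' where u': "wf_term F ar u'" "vars u' = {}" "u = xi m Bot u'" using g_cond.IH by blast
  have "\<exists>t. cs_step F ar R enum (Fun (Cond f i j) (map (subst \<sigma> \<circ> emb) ls @ repl_at cs i (map (subst \<sigma> \<circ> emb \<circ> snd) (take (j-1) conds) @ [xi m Bot u']))) t"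
    by (rule cond_red) (use g_cond.hyps u' in auto)
  then show ?case using g_cond.prems u'(3) by simp
qed

end

theorem lemmaA:
  fixes F :: "'f set" and ar :: "'f \<Rightarrow> nat" and R :: "('f, 'v) crule set"
    and enum :: "'f \<Rightarrow> ('f, 'v) crule list"
    and s t :: "('f hsym, 'v) trm"
  assumes "infinite (UNIV :: 'v set)"
    and "strong_cctrs F ar R"
    and "\<forall>f. distinct (enum f) \<and> set (enum f) = rules_of R f"
    and "proper_ground F ar R enum s"
    and "(cs_step F ar R enum)\<^sup>*\<^sup>* s t"
    and "\<not> (\<exists>u. cs_step F ar R enum t u)"
  shows "bot_pattern F ar enum t"
proof -
  interpret L F ar R enum by (rule L.intro[OF assms(1,2,3)])
  have "G s" using assms(4) proper_good unfolding proper_ground_def by blast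
  then have "G t" using steps_pres assms(5) by blast
  then obtain t' where t': "wf_term F ar t'" "vars t' = {}" "t = xi m Bot t'" using nf_bot assms(6) by blast
  have "set (vars_list t) = {}" using t' by simp
  then have "vars_list t = []" by (metis set_empty set_vars_list)
  then show ?thesis unfolding bot_pattern_def linear_def using t' by auto
qed


end
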